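(* Let $T$ be a tree and $H$ a graph. Let $V\subseteq V(T(H))$ and let $V_1,V_2\subseteq V$ with $V_1\cup V_2=V$ and $V_1\cap V_2=\emptyset$ (one of them possibly empty). Suppose there are two vertices $u,v$ of $T$ and vertices $1,\dots,t$ of $H$ such that for each $i\in\{1,\dots,t\}$ the role of $u^i$ differs from the role of $v^i$. Then $T(H)$ has a matching of size $t$ such that the two ends of each of its edges have different roles.
   Context: Graph $T(H)$: for a tree $T$ and a graph $H$ with $V(H)=\{1,\dots,m\}$, $T(H)$ has vertices $v^i$ ($v\in V(T)$, $1\le i\le m$); for each $v$ the vertices $v^1,\dots,v^m$ span a copy $H^v$ of $H$ ($v^iv^j$ an edge iff $ij\in E(H)$), and $u^iv^i$ is an edge for each $i$ whenever $uv\in E(T)$. Roles with respect to $V_1,V_2$: each vertex of $T(H)$ has exactly one of three roles: belonging to $V_1$, belonging to $V_2$, or belonging to $V(T(H))\setminus V$. *)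

theory Defs
  imports Main
begin

definition simple_graph :: "'a set \<Rightarrow> 'a set set \<Rightarrow> bool" where
  "simple_graph VV EE \<longleftrightarrow> finite VV \<and> (\<forall>e\<in>EE. e \<subseteq> VV \<and> card e = 2)"

definition is_walk :: "'a set \<Rightarrow> 'a set set \<Rightarrow> 'a list \<Rightarrow> bool" where
  "is_walk VV EE xs \<longleftrightarrow> xs \<noteq> [] \<and> set xs \<subseteq> VV \<and>
     (\<forall>k. Suc k < length xs \<longrightarrow> {xs ! k, xs ! Suc k} \<in> EE)"

definition is_path :: "'a set \<Rightarrow> 'a set set \<Rightarrow> 'a list \<Rightarrow> bool" where
  "is_path VV EE xs \<longleftrightarrow> is_walk VV EE xs \<and> distinct xs"

definition connected_graph :: "'a set \<Rightarrow> 'a set set \<Rightarrow> bool" where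
  "connected_graph VV EE \<longleftrightarrow>
     (\<forall>x\<in>VV. \<forall>y\<in>VV. \<exists>xs. is_path VV EE xs \<and> hd xs = x \<and> last xs = y)"

definition is_cycle :: "'a set \<Rightarrow> 'a set set \<Rightarrow> 'a list \<Rightarrow> bool" where
  "is_cycle VV EE xs \<longleftrightarrow> is_path VV EE xs \<and> length xs \<ge> 3 \<and> {last xs, hd xs} \<in> EE"

definition is_tree :: "'a set \<Rightarrow> 'a set set \<Rightarrow> bool" where
  "is_tree VV EE \<longleftrightarrow> simple_graph VV EE \<and> VV \<noteq> {} \<and> connected_graph VV EE \<and>
     \<not> (\<exists>xs. is_cycle VV EE xs)"

text \<open>The graph T(H): vertex (v,i) stands for v^i; H has vertex set {1..m}.\<close>
definition TH_verts :: "'a set \<Rightarrow> nat \<Rightarrow> ('a \<times> nat) set" where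
  "TH_verts VT m = VT \<times> {1..m}"

definition TH_edges :: "'a set \<Rightarrow> 'a set set \<Rightarrow> nat \<Rightarrow> nat set set \<Rightarrow> ('a \<times> nat) set set" where
  "TH_edges VT ET m EH =
     {{(v, i), (v, j)} | v i j. v \<in> VT \<and> {i, j} \<in> EH} \<union>
     {{(u, i), (v, i)} | u v i. {u, v} \<in> ET \<and> i \<in> {1..m}}"

datatype role = In_V1 | In_V2 | Outside_V

definition role_of :: "'b set \<Rightarrow> 'b set \<Rightarrow> 'b \<Rightarrow> role" where
  "role_of V1 V2 x = (if x \<in> V1 then In_V1 else if x \<in> V2 then In_V2 else Outside_V)"

definition is_matching :: "'b set set \<Rightarrow> 'b set set \<Rightarrow> bool" where
  "is_matching EE M \<longleftrightarrow> M \<subseteq> EE \<and> (\<forall>e\<in>M. \<forall>f\<in>M. e \<noteq> f \<longrightarrow> e \<inter> f = {})"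

end

theory Submission
  imports Defs
begin

lemma list_change:
  "xs \<noteq> [] \<Longrightarrow> f (hd xs) \<noteq> f (last xs) \<Longrightarrow> \<exists>k. Suc k < length xs \<and> f (xs ! k) \<noteq> f (xs ! Suc k)"
proof (induction xs)
  case Nil then show ?case by simp
next
  case (Cons a xs)
  show ?case
  proof (cases xs)
    case Nil then show ?thesis using Cons by simp
  next
    case (Cons b ys)
    show ?thesis
    proof (cases "f a = f b")
      case True
      then have "f (hd xs) \<noteq> f (last xs)" using Cons.prems Cons by simp
      then obtain k where "Suc k < length xs" "f (xs ! k) \<noteq> f (xs ! Suc k)"
        using Cons.IH Cons by auto
      then show ?thesis by (intro exI[of _ "Suc k"]) simp
    next
      case False
      then show ?thesis using Cons by (intro exI[of _ 0]) simp
    qed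
  qed
qed

theorem lemma1:
  fixes VT :: "'a set" and ET :: "'a set set" and m :: nat and EH :: "nat set set"
    and V V1 V2 :: "('a \<times> nat) set" and u v :: 'a and t :: nat
  assumes "is_tree VT ET"
    and "simple_graph {1..m} EH"
    and "V \<subseteq> TH_verts VT m"
    and "V1 \<subseteq> V" and "V2 \<subseteq> V" and "V1 \<union> V2 = V" and "V1 \<inter> V2 = {}"
    and "u \<in> VT" and "v \<in> VT"
    and "t \<le> m"
    and "\<forall>i\<in>{1..t}. role_of V1 V2 (u, i) \<noteq> role_of V1 V2 (v, i)"
  shows "\<exists>M. is_matching (TH_edges VT ET m EH) M \<and> finite M \<and> card M = t \<and>
           (\<forall>e\<in>M. \<exists>x y. e = {x, y} \<and> role_of V1 V2 x \<noteq> role_of V1 V2 y)"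
proof -
  obtain xs where xs: "is_path VT ET xs" "hd xs = u" "last xs = v"
    using assms(1,8,9) unfolding is_tree_def connected_graph_def by blast
  have ne: "xs \<noteq> []" and edg: "\<And>k. Suc k < length xs \<Longrightarrow> {xs ! k, xs ! Suc k} \<in> ET"
    using xs(1) unfolding is_path_def is_walk_def by auto
  let ?r = "role_of V1 V2"
  have ex: "\<exists>k. Suc k < length xs \<and> ?r (xs ! k, i) \<noteq> ?r (xs ! Suc k, i)" if "i \<in> {1..t}" for i
    using list_change[OF ne, of "\<lambda>w. ?r (w, i)"] xs(2,3) assms(11) that by auto
  define K where "K i = (SOME k. Suc k < length xs \<and> ?r (xs ! k, i) \<noteq> ?r (xs ! Suc k, i))" for i
  have K: "Suc (K i) < length xs \<and> ?r (xs ! K i, i) \<noteq> ?r (xs ! Suc (K i), i)" if "i \<in> {1..t}" for i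
    unfolding K_def using someI_ex[OF ex[OF that]] .
  define g where "g i = {(xs ! K i, i), (xs ! Suc (K i), i)}" for i
  define M where "M = g ` {1..t}"
  have snd_g: "snd ` g i = {i}" for i unfolding g_def by auto
  have inj: "inj_on g {1..t}"
    by (rule inj_onI) (metis snd_g the_elem_eq)
  have "is_matching (TH_edges VT ET m EH) M"
    unfolding is_matching_def
  proof
    show "M \<subseteq> TH_edges VT ET m EH"
    proof
      fix e assume "e \<in> M"
      then obtain i where i: "i \<in> {1..t}" "e = g i" unfolding M_def by auto
      have "{xs ! K i, xs ! Suc (K i)} \<in> ET" using edg K[OF i(1)] by blast
      moreover have "i \<in> {1..m}" using i(1) assms(10) by auto
      ultimately show "e \<in> TH_edges VT ET m EH"
        unfolding TH_edges_def i(2) g_def by blast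
    qed
  next
    show "\<forall>e\<in>M. \<forall>f\<in>M. e \<noteq> f \<longrightarrow> e \<inter> f = {}"
    proof (intro ballI impI)
      fix e f assume "e \<in> M" "f \<in> M" "e \<noteq> f"
      then obtain i j where "e = g i" "f = g j" "i \<noteq> j" unfolding M_def by auto
      then show "e \<inter> f = {}" unfolding g_def by auto
    qed
  qed
  moreover have "finite M" "card M = t" unfolding M_def using card_image[OF inj] by auto
  moreover have "\<forall>e\<in>M. \<exists>x y. e = {x, y} \<and> ?r x \<noteq> ?r y"
    unfolding M_def g_def using K by blast
  ultimately show ?thesis by blast
qed

end
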